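(* Assume $0<\theta_1\le\theta_2\le\dots\le\theta_N$, $m_i>0$, $\sigma>0$, $p>0$, and let $\mathbf y\in\mathbb R^N_+$ solve $$\sum_{k=1}^N m_k(y_k-y_i)+\sigma(\theta_i-y_i^p)y_i=0,\qquad i=1,\dots,N.$$ Then $\theta_1\le y_1^p\le y_2^p\le\dots\le y_N^p\le\theta_N$, and for every $i$, $$y_i^p\ge\theta_i+\frac{m_{\ge i}-M}{\sigma},\qquad m_{\ge i}=m_i+\dots+m_N,\ M=m_1+\dots+m_N.$$ Moreover, for $i\ne j$, $\theta_i=\theta_j$ if and only if $y_i=y_j$.
   Context: $\mathbb R^N_+$ denotes the set of vectors with all coordinates strictly positive. *)

theory Defs
  imports "HOL-Analysis.Analysis"
begin

end

theory Submission
  imports Defs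
begin

theorem lemma5p2:
  fixes N :: nat and \<theta> m y :: "nat \<Rightarrow> real" and \<sigma> p :: real
  assumes N: "N \<ge> 1"
    and theta_pos: "\<theta> 1 > 0"
    and theta_mono: "\<And>i. 1 \<le> i \<Longrightarrow> i < N \<Longrightarrow> \<theta> i \<le> \<theta> (Suc i)"
    and m_pos: "\<And>i. 1 \<le> i \<Longrightarrow> i \<le> N \<Longrightarrow> m i > 0"
    and sigma: "\<sigma> > 0" and p: "p > 0"
    and y_pos: "\<And>i. 1 \<le> i \<Longrightarrow> i \<le> N \<Longrightarrow> y i > 0"
    and eq: "\<And>i. 1 \<le> i \<Longrightarrow> i \<le> N \<Longrightarrow>
        (\<Sum>k=1..N. m k * (y k - y i)) + \<sigma> * (\<theta> i - y i powr p) * y i = 0"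
  shows "\<theta> 1 \<le> y 1 powr p
       \<and> (\<forall>i. 1 \<le> i \<and> i < N \<longrightarrow> y i powr p \<le> y (Suc i) powr p)
       \<and> y N powr p \<le> \<theta> N
       \<and> (\<forall>i. 1 \<le> i \<and> i \<le> N \<longrightarrow>
            y i powr p \<ge> \<theta> i + ((\<Sum>k=i..N. m k) - (\<Sum>k=1..N. m k)) / \<sigma>)
       \<and> (\<forall>i j. 1 \<le> i \<and> i \<le> N \<and> 1 \<le> j \<and> j \<le> N \<and> i \<noteq> j \<longrightarrow>
            (\<theta> i = \<theta> j \<longleftrightarrow> y i = y j))"
proof -
  have tle: "\<theta> i \<le> \<theta> j" if "1 \<le> i" "i \<le> j" "j \<le> N" for i j
    using that
  proof (induction j)
    case 0 then show ?case by simp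
  next
    case (Suc j)
    show ?case
    proof (cases "i = Suc j")
      case False
      then have "\<theta> i \<le> \<theta> j" using Suc by simp
      also have "\<theta> j \<le> \<theta> (Suc j)" using Suc False theta_mono[of j] by simp
      finally show ?thesis .
    qed simp
  qed
  define S where "S = (\<Sum>k=1..N. m k * y k)"
  define M where "M = (\<Sum>k=1..N. m k)"
  have Spos: "S > 0" unfolding S_def
    by (rule sum_pos) (use N m_pos y_pos in auto)
  have key: "\<sigma> * \<theta> i = M + \<sigma> * y i powr p - S / y i" if "1 \<le> i" "i \<le> N" for i
  proof -
    have yi: "y i > 0" using y_pos that by simp
    have "(\<Sum>k=1..N. m k * (y k - y i)) = S - M * y i"
      unfolding S_def M_def by (simp add: algebra_simps sum_subtractf sum_distrib_left sum_distrib_right mult.commute)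
    with eq[OF that] have "S - M * y i + \<sigma> * (\<theta> i - y i powr p) * y i = 0" by simp
    then have "S = y i * (M + \<sigma> * y i powr p - \<sigma> * \<theta> i)" by (simp add: algebra_simps)
    then have "S / y i = M + \<sigma> * y i powr p - \<sigma> * \<theta> i" using yi by simp
    then show ?thesis by simp
  qed
  have gmono: "\<theta> j < \<theta> i" if "y j < y i" "1 \<le> i" "i \<le> N" "1 \<le> j" "j \<le> N" for i j
  proof -
    have yj: "y j > 0" using y_pos that by simp
    have "y j powr p < y i powr p" using yj that p by (simp add: powr_less_mono2)
    moreover have "S / y i < S / y j" using yj that Spos by (simp add: divide_strict_left_mono mult_pos_pos)
    ultimately have "\<sigma> * \<theta> j < \<sigma> * \<theta> i" using key[of i] key[of j] that sigma
      by (smt (verit) mult_strict_left_mono)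
    then show ?thesis using sigma by simp
  qed
  have ymono: "y i \<le> y j" if "\<theta> i \<le> \<theta> j" "1 \<le> i" "i \<le> N" "1 \<le> j" "j \<le> N" for i j
    using gmono[of j i] that by force
  have ymin: "y 1 \<le> y k" if "1 \<le> k" "k \<le> N" for k
    using ymono[of 1 k] tle[of 1 k] that N by simp
  have ymax: "y k \<le> y N" if "1 \<le> k" "k \<le> N" for k
    using ymono[of k N] tle[of k N] that N by simp
  have c1: "\<theta> 1 \<le> y 1 powr p"
  proof -
    have "(\<Sum>k=1..N. m k * (y k - y 1)) \<ge> 0"
      proof (rule sum_nonneg)
      fix k assume "k \<in> {1..N}"
      then show "0 \<le> m k * (y k - y 1)" using m_pos[of k] ymin[of k] by simp
    qed
    with eq[of 1] N have "\<sigma> * (\<theta> 1 - y 1 powr p) * y 1 \<le> 0" by simp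
    then have "\<sigma> * (\<theta> 1 - y 1 powr p) \<le> 0" using y_pos[of 1] N
      by (simp add: mult_le_0_iff)
    then show ?thesis using sigma by (simp add: mult_le_0_iff)
  qed
  have c3: "y N powr p \<le> \<theta> N"
  proof -
    have "(\<Sum>k=1..N. m k * (y k - y N)) \<le> 0"
      proof (rule sum_nonpos)
      fix k assume "k \<in> {1..N}"
      then show "m k * (y k - y N) \<le> 0" using m_pos[of k] ymax[of k] by (simp add: mult_nonneg_nonpos)
    qed
    with eq[of N] N have "\<sigma> * (\<theta> N - y N powr p) * y N \<ge> 0" by simp
    then have "\<sigma> * (\<theta> N - y N powr p) \<ge> 0" using y_pos[of N] N
      by (simp add: zero_le_mult_iff)
    then show ?thesis using sigma by (simp add: zero_le_mult_iff)
  qed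
  have c2: "y i powr p \<le> y (Suc i) powr p" if "1 \<le> i" "i < N" for i
    using ymono[of i "Suc i"] theta_mono[of i] that y_pos[of i] p
    by (simp add: powr_mono2)
  have c4: "y i powr p \<ge> \<theta> i + ((\<Sum>k=i..N. m k) - (\<Sum>k=1..N. m k)) / \<sigma>"
    if "1 \<le> i" "i \<le> N" for i
  proof -
    have yi: "y i > 0" using y_pos that by simp
    have split: "{1..N} = {1..<i} \<union> {i..N}" using that by auto
    have disj: "{1..<i} \<inter> {i..N} = {}" by auto
    have Msplit: "(\<Sum>k=1..N. m k) = (\<Sum>k\<in>{1..<i}. m k) + (\<Sum>k=i..N. m k)"
      unfolding split by (rule sum.union_disjoint) (use disj in auto)
    have Tsplit: "(\<Sum>k=1..N. m k * (y k - y i)) = (\<Sum>k\<in>{1..<i}. m k * (y k - y i)) + (\<Sum>k=i..N. m k * (y k - y i))"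
      unfolding split by (rule sum.union_disjoint) (use disj in auto)
    have h2: "(\<Sum>k=i..N. m k * (y k - y i)) \<ge> 0"
      proof (rule sum_nonneg)
      fix k assume "k \<in> {i..N}"
      then show "0 \<le> m k * (y k - y i)" using m_pos[of k] ymono[of i k] tle[of i k] that by simp
    qed
    have h1: "(\<Sum>k\<in>{1..<i}. m k * (y k - y i)) \<ge> (\<Sum>k\<in>{1..<i}. m k * (- y i))"
    proof (rule sum_mono)
      fix k assume "k \<in> {1..<i}"
      then have "m k > 0" "y k > 0" using m_pos y_pos that by auto
      then show "m k * (- y i) \<le> m k * (y k - y i)" by (simp add: right_diff_distrib)
    qed
    have "(\<Sum>k\<in>{1..<i}. m k * (- y i)) = - (\<Sum>k\<in>{1..<i}. m k) * y i"
      by (simp add: sum_distrib_right sum_negf)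
    with h1 h2 Tsplit eq[OF that]
    have "\<sigma> * (\<theta> i - y i powr p) * y i \<le> (\<Sum>k\<in>{1..<i}. m k) * y i" by linarith
    then have "\<sigma> * (\<theta> i - y i powr p) \<le> (\<Sum>k\<in>{1..<i}. m k)" using yi by simp
    then have "\<theta> i - y i powr p \<le> (\<Sum>k\<in>{1..<i}. m k) / \<sigma>" using sigma
      by (simp add: pos_le_divide_eq mult.commute)
    then show ?thesis using Msplit by (simp add: diff_divide_distrib)
  qed
  have c5: "\<theta> i = \<theta> j \<longleftrightarrow> y i = y j"
    if "1 \<le> i" "i \<le> N" "1 \<le> j" "j \<le> N" for i j
  proof
    assume "\<theta> i = \<theta> j" then show "y i = y j" using ymono[of i j] ymono[of j i] that by simp
  next
    assume "y i = y j" then show "\<theta> i = \<theta> j" using key[of i] key[of j] that sigma by (metis mult_cancel_left less_irrefl)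
  qed
  show ?thesis using c1 c2 c3 c4 c5 by blast
qed

end
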